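(* Let $(X,T)$ be a transitive topological dynamical system with $T$ semi-open, and assume that $\operatorname{supp}(X,T)\setminus\mathrm{Fix}(X,T^n)\ne\emptyset$ for every $n\in\mathbb{N}$. Then for every $x\in X$, the Banach proximal cell $BP(x)=\{y\in X:(x,y)\text{ is Banach proximal}\}$ is of first category in $X$.
   Context: A topological dynamical system $(X,T)$ consists of a non-empty compact metric space $(X,d)$ and a continuous map $T:X\to X$. It is transitive if for all non-empty open $U,V\subset X$ the set $\{n\ge0: U\cap T^{-n}V\ne\emptyset\}$ is infinite. $T$ is semi-open if for every non-empty open $U\subset X$ the set $T(U)$ has non-empty interior. $\mathrm{Fix}(X,T^n)=\{x\in X: T^nx=x\}$. A set $F\subset\mathbb{Z}_+$ has Banach density one if for every $\lambda<1$ there is $N\ge1$ with $\#(F\cap I)\ge\lambda\,\#(I)$ for every interval of integers $I\subset\mathbb{Z}_+$ with $\#(I)\ge N$. A pair $(x,y)$ is Banach proximal if for every $\varepsilon>0$ the set $\{n\in\mathbb{Z}_+: d(T^nx,T^ny)<\varepsilon\}$ has Banach density one. $\operatorname{supp}(X,T)$ is the smallest closed set $C\subset X$ with $\mu(C)=1$ for all $T$-invariant Borel probability measures $\mu$. *)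

theory Defs
  imports "HOL-Analysis.Analysis" "HOL-Probability.Probability"
begin

definition tds :: "'a::metric_space set \<Rightarrow> ('a \<Rightarrow> 'a) \<Rightarrow> bool" where
  "tds X T \<longleftrightarrow> X \<noteq> {} \<and> compact X \<and> continuous_on X T \<and> T ` X \<subseteq> X"

definition transitive_sys :: "'a::metric_space set \<Rightarrow> ('a \<Rightarrow> 'a) \<Rightarrow> bool" where
  "transitive_sys X T \<longleftrightarrow>
     (\<forall>U V. openin (top_of_set X) U \<and> U \<noteq> {} \<and> openin (top_of_set X) V \<and> V \<noteq> {} \<longrightarrow>
        infinite {n::nat. U \<inter> {x \<in> X. (T ^^ n) x \<in> V} \<noteq> {}})"

definition semi_open :: "'a::metric_space set \<Rightarrow> ('a \<Rightarrow> 'a) \<Rightarrow> bool" where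
  "semi_open X T \<longleftrightarrow>
     (\<forall>U. openin (top_of_set X) U \<and> U \<noteq> {} \<longrightarrow>
        (top_of_set X) interior_of (T ` U) \<noteq> {})"

definition Fix :: "'a set \<Rightarrow> ('a \<Rightarrow> 'a) \<Rightarrow> nat \<Rightarrow> 'a set" where
  "Fix X T n = {x \<in> X. (T ^^ n) x = x}"

definition banach_density_one :: "nat set \<Rightarrow> bool" where
  "banach_density_one F \<longleftrightarrow>
     (\<forall>c::real. c < 1 \<longrightarrow> (\<exists>N::nat. N \<ge> 1 \<and>
        (\<forall>a k. k \<ge> N \<longrightarrow> real (card (F \<inter> {a..<a+k})) \<ge> c * real k)))"

definition banach_proximal :: "('a::metric_space \<Rightarrow> 'a) \<Rightarrow> 'a \<Rightarrow> 'a \<Rightarrow> bool" where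
  "banach_proximal T x y \<longleftrightarrow>
     (\<forall>\<epsilon>>0. banach_density_one {n. dist ((T ^^ n) x) ((T ^^ n) y) < \<epsilon>})"

definition BP :: "'a::metric_space set \<Rightarrow> ('a \<Rightarrow> 'a) \<Rightarrow> 'a \<Rightarrow> 'a set" where
  "BP X T x = {y \<in> X. banach_proximal T x y}"

definition invariant_measure :: "'a::metric_space set \<Rightarrow> ('a \<Rightarrow> 'a) \<Rightarrow> 'a measure \<Rightarrow> bool" where
  "invariant_measure X T \<mu> \<longleftrightarrow>
     sets \<mu> = sets (restrict_space borel X) \<and> prob_space \<mu> \<and>
     T \<in> measurable \<mu> \<mu> \<and> distr \<mu> \<mu> T = \<mu>"

definition supp :: "'a::metric_space set \<Rightarrow> ('a \<Rightarrow> 'a) \<Rightarrow> 'a set" where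
  "supp X T = \<Inter>{C. closedin (top_of_set X) C \<and>
                    (\<forall>\<mu>. invariant_measure X T \<mu> \<longrightarrow> emeasure \<mu> C = 1)}"

definition nowhere_dense_in :: "'a::topological_space set \<Rightarrow> 'a set \<Rightarrow> bool" where
  "nowhere_dense_in X S \<longleftrightarrow> S \<subseteq> X \<and>
     (top_of_set X) interior_of ((top_of_set X) closure_of S) = {}"

definition first_category_in :: "'a::topological_space set \<Rightarrow> 'a set \<Rightarrow> bool" where
  "first_category_in X A \<longleftrightarrow>
     (\<exists>\<F>. countable \<F> \<and> (\<forall>S\<in>\<F>. nowhere_dense_in X S) \<and> A = \<Union>\<F>)"

end

theory Submission
  imports Defs
begin



lemma funpow_maps: "tds X T \<Longrightarrow> x \<in> X \<Longrightarrow> (T^^n) x \<in> X"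
  by (induction n) (auto simp: tds_def)

lemma funpow_image: "tds X T \<Longrightarrow> (T^^n) ` X \<subseteq> X"
  using funpow_maps by blast

lemma funpow_cont: "tds X T \<Longrightarrow> continuous_on X (T^^n)"
proof (induction n)
  case 0 then show ?case by (simp add: continuous_on_id)
next
  case (Suc n)
  have "continuous_on ((T^^n) ` X) T"
    using Suc.prems funpow_image[OF Suc.prems] by (meson continuous_on_subset tds_def)
  then show ?case using Suc continuous_on_compose[of X "T^^n" T] by simp
qed

lemma funpow_comm: "(T^^a) ((T^^b) y) = (T^^(a+b)) y"
  by (simp add: funpow_add)

lemma semi_open_iter:
  assumes "tds X T" "semi_open X T" "openin (top_of_set X) U" "U \<noteq> {}"
  shows "(top_of_set X) interior_of ((T^^n) ` U) \<noteq> {}"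
proof (induction n)
  case 0 then show ?case using assms by (simp add: interior_of_openin)
next
  case (Suc n)
  let ?I = "(top_of_set X) interior_of ((T^^n) ` U)"
  have "(top_of_set X) interior_of (T ` ?I) \<noteq> {}"
    using assms(2) Suc unfolding semi_open_def by auto
  moreover have "T ` ?I \<subseteq> (T^^Suc n) ` U"
    using interior_of_subset by fastforce
  ultimately show ?case using interior_of_mono by blast
qed

definition meager :: "'a::topological_space set \<Rightarrow> 'a set \<Rightarrow> bool" where
  "meager X A \<longleftrightarrow> (\<exists>F. countable F \<and> (\<forall>S\<in>F. nowhere_dense_in X S) \<and> A \<subseteq> \<Union>F)"

lemma nd_subset: "nowhere_dense_in X S \<Longrightarrow> S' \<subseteq> S \<Longrightarrow> nowhere_dense_in X S'"
  unfolding nowhere_dense_in_def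
proof (intro conjI)
  assume a: "S \<subseteq> X \<and> top_of_set X interior_of top_of_set X closure_of S = {}" "S' \<subseteq> S"
  then show "S' \<subseteq> X" by blast
  have "top_of_set X interior_of top_of_set X closure_of S' \<subseteq> top_of_set X interior_of top_of_set X closure_of S"
    by (intro interior_of_mono closure_of_mono a(2))
  then show "top_of_set X interior_of top_of_set X closure_of S' = {}" using a(1) by blast
qed

lemma meager_subset: "meager X A \<Longrightarrow> B \<subseteq> A \<Longrightarrow> meager X B"
proof -
  assume "meager X A" "B \<subseteq> A"
  then obtain F where F: "countable F" "\<forall>S\<in>F. nowhere_dense_in X S" "A \<subseteq> \<Union>F"
    unfolding meager_def by auto
  show ?thesis unfolding meager_def
    by (rule exI[of _ F]) (use F \<open>B \<subseteq> A\<close> in auto)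
qed

lemma meager_UN:
  assumes "countable I" "\<And>i. i \<in> I \<Longrightarrow> meager X (A i)"
  shows "meager X (\<Union>i\<in>I. A i)"
proof -
  obtain F where F: "\<And>i. i \<in> I \<Longrightarrow> countable (F i) \<and> (\<forall>S\<in>F i. nowhere_dense_in X S) \<and> A i \<subseteq> \<Union>(F i)"
    using assms(2) unfolding meager_def by metis
  have "countable (\<Union>i\<in>I. F i)" using F assms(1) by (intro countable_UN) auto
  moreover have "\<forall>S\<in>(\<Union>i\<in>I. F i). nowhere_dense_in X S" using F by blast
  moreover have "(\<Union>i\<in>I. A i) \<subseteq> \<Union>(\<Union>i\<in>I. F i)" using F by blast
  ultimately show ?thesis unfolding meager_def by (intro exI[of _ "\<Union>i\<in>I. F i"]) simp
qed

lemma meager_Un: "meager X A \<Longrightarrow> meager X B \<Longrightarrow> meager X (A \<union> B)"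
proof -
  assume a: "meager X A" "meager X B"
  have "meager X (\<Union>b\<in>{True,False}. if b then A else B)"
    by (rule meager_UN) (use a in auto)
  moreover have "(\<Union>b\<in>{True,False}. if b then A else B) = A \<union> B" by auto
  ultimately show ?thesis by simp
qed

lemma nd_meager: "nowhere_dense_in X S \<Longrightarrow> meager X S"
  unfolding meager_def by (rule exI[of _ "{S}"]) auto

lemma meager_first_cat:
  assumes "A \<subseteq> X" "meager X A" shows "first_category_in X A"
proof -
  obtain F where F: "countable F" "\<forall>S\<in>F. nowhere_dense_in X S" "A \<subseteq> \<Union>F"
    using assms(2) unfolding meager_def by auto
  have "countable ((\<lambda>S. S \<inter> A) ` F)" using F(1) by simp
  moreover have "\<forall>S\<in>(\<lambda>S. S \<inter> A) ` F. nowhere_dense_in X S"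
    using F(2) nd_subset by blast
  moreover have "A = \<Union>((\<lambda>S. S \<inter> A) ` F)" using F(3) by blast
  ultimately show ?thesis unfolding first_category_in_def by (intro exI[of _ "(\<lambda>S. S \<inter> A) ` F"]) simp
qed

lemma closed_nd:
  assumes "closedin (top_of_set X) C" "(top_of_set X) interior_of C = {}"
  shows "nowhere_dense_in X C"
  using assms unfolding nowhere_dense_in_def
  by (simp add: closure_of_closedin closedin_imp_subset)

lemma not_nd_open:
  assumes "closedin (top_of_set X) B" "openin (top_of_set X) W" "\<not> nowhere_dense_in X (B \<inter> W)"
  shows "\<exists>G. openin (top_of_set X) G \<and> G \<noteq> {} \<and> G \<subseteq> B \<inter> W"
proof -
  have sub: "B \<inter> W \<subseteq> X" using assms(1) closedin_imp_subset by auto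
  define Op where "Op = (top_of_set X) interior_of ((top_of_set X) closure_of (B \<inter> W))"
  have One: "Op \<noteq> {}" using assms(3) sub unfolding nowhere_dense_in_def Op_def by auto
  have Oo: "openin (top_of_set X) Op" unfolding Op_def by simp
  have OB: "Op \<subseteq> B" unfolding Op_def
    by (meson Int_lower1 assms(1) closure_of_minimal interior_of_subset order_trans)
  have OW: "Op \<subseteq> (top_of_set X) closure_of W" unfolding Op_def
    by (meson Int_lower2 closure_of_mono interior_of_subset order_trans)
  have "Op \<inter> W \<noteq> {}"
    using openin_Int_closure_of_eq_empty[OF Oo, of W] OW One by auto
  then show ?thesis using Oo assms(2) OB by (intro exI[of _ "Op \<inter> W"]) auto
qed




lemma countable_base:
  fixes X :: "'a::metric_space set"
  assumes "compact X"
  shows "\<exists>Bs. countable Bs \<and> (\<forall>b\<in>Bs. openin (top_of_set X) b) \<and>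
    (\<forall>W w. openin (top_of_set X) W \<and> w \<in> W \<longrightarrow> (\<exists>b\<in>Bs. w \<in> b \<and> b \<subseteq> W))"
proof -
  have tb: "\<forall>e>0. \<exists>k. finite k \<and> k \<subseteq> X \<and> X \<subseteq> (\<Union>x\<in>k. ball x e)"
    by (rule seq_compact_imp_totally_bounded[OF compact_imp_seq_compact[OF assms]])
  have "\<forall>n::nat. \<exists>k. finite k \<and> k \<subseteq> X \<and> X \<subseteq> (\<Union>x\<in>k. ball x (1/real (Suc n)))"
    using tb by simp
  then obtain C where C: "\<And>n. finite (C n) \<and> C n \<subseteq> X \<and> X \<subseteq> (\<Union>x\<in>C n. ball x (1/real (Suc n)))"
    by metis
  define Bs where "Bs = (\<Union>n. (\<lambda>c. X \<inter> ball c (1/real (Suc n))) ` C n)"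
  have "countable Bs" unfolding Bs_def
    using C by (intro countable_UN) (auto intro: countable_finite)
  moreover have "\<forall>b\<in>Bs. openin (top_of_set X) b" unfolding Bs_def by auto
  moreover have base: "\<exists>b\<in>Bs. w \<in> b \<and> b \<subseteq> W" if W: "openin (top_of_set X) W" and w: "w \<in> W" for W w
  proof -
    obtain r where r: "r > 0" "ball w r \<inter> X \<subseteq> W"
      using W w unfolding openin_contains_ball by blast
    have wX: "w \<in> X" using W w openin_imp_subset by blast
    obtain n :: nat where n: "2 / r < real n" using reals_Archimedean2 by blast
    have "2 / r < real (Suc n)" using n by simp
    then have n2: "2 / real (Suc n) < r" using r(1)
      by (simp add: field_simps)
    have "w \<in> (\<Union>x\<in>C n. ball x (1/real (Suc n)))" using C[of n] wX by (meson subsetD)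
    then obtain c where c: "c \<in> C n" "w \<in> ball c (1/real (Suc n))" by (rule UN_E)
    have "X \<inter> ball c (1/real (Suc n)) \<subseteq> W"
    proof
      fix y assume y: "y \<in> X \<inter> ball c (1/real (Suc n))"
      have "dist w y \<le> dist w c + dist c y" by (rule dist_triangle)
      also have "\<dots> < 2 / real (Suc n)" using c(2) y by (simp add: dist_commute)
      finally have "y \<in> ball w r" using n2 by simp
      then show "y \<in> W" using y r(2) by blast
    qed
    moreover have "X \<inter> ball c (1/real (Suc n)) \<in> Bs" unfolding Bs_def using c(1) by blast
    ultimately show ?thesis using c(2) wX by blast
  qed
  moreover have "\<forall>W w. openin (top_of_set X) W \<and> w \<in> W \<longrightarrow> (\<exists>b\<in>Bs. w \<in> b \<and> b \<subseteq> W)"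
    using base by simp
  ultimately show ?thesis apply (rule_tac exI[of _ Bs]) by simp
qed

lemma local_nonmeager:
  fixes X :: "'a::metric_space set"
  assumes "compact X" "A \<subseteq> X" "\<not> meager X A"
  shows "\<exists>U0. openin (top_of_set X) U0 \<and> U0 \<noteq> {} \<and>
    (\<forall>W. openin (top_of_set X) W \<and> W \<noteq> {} \<and> W \<subseteq> U0 \<longrightarrow> \<not> meager X (A \<inter> W))"
proof -
  obtain Bs where Bs: "countable Bs" "\<forall>b\<in>Bs. openin (top_of_set X) b"
    "\<forall>W w. openin (top_of_set X) W \<and> w \<in> W \<longrightarrow> (\<exists>b\<in>Bs. w \<in> b \<and> b \<subseteq> W)"
    using countable_base[OF assms(1)] by (elim exE conjE)
  define Bm where "Bm = {b\<in>Bs. meager X (A \<inter> b)}"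
  define M where "M = \<Union>Bm"
  have "meager X (\<Union>b\<in>Bm. A \<inter> b)"
    by (rule meager_UN) (use Bs(1) in \<open>auto simp: Bm_def\<close>)
  moreover have "A \<inter> M = (\<Union>b\<in>Bm. A \<inter> b)" unfolding M_def by blast
  ultimately have mM: "meager X (A \<inter> M)" by simp
  have oM: "openin (top_of_set X) M" unfolding M_def Bm_def by (rule openin_Union) (use Bs(2) in auto)
  define D where "D = X - M"
  have cD: "closedin (top_of_set X) D" unfolding D_def
  proof (rule closedin_diff)
    show "closedin (top_of_set X) X" using closedin_topspace[of "top_of_set X"] by simp
  qed (rule oM)
  show ?thesis
  proof (cases "(top_of_set X) interior_of D = {}")
    case True
    then have "nowhere_dense_in X D" by (rule closed_nd[OF cD])
    then have "meager X D" by (rule nd_meager)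
    then have "meager X ((A \<inter> M) \<union> D)" by (rule meager_Un[OF mM])
    moreover have "A \<subseteq> (A \<inter> M) \<union> D" using assms(2) unfolding D_def by blast
    ultimately have "meager X A" by (rule meager_subset)
    then show ?thesis using assms(3) by simp
  next
    case False
    define U0 where "U0 = (top_of_set X) interior_of D"
    have key: "\<not> meager X (A \<inter> W)" if W: "openin (top_of_set X) W" "W \<noteq> {}" "W \<subseteq> U0" for W
    proof
      assume mW: "meager X (A \<inter> W)"
      obtain w where w: "w \<in> W" using W(2) by blast
      obtain b where b: "b \<in> Bs" "w \<in> b" "b \<subseteq> W" using Bs(3) W(1) w by blast
      have "A \<inter> b \<subseteq> A \<inter> W" using b(3) by blast
      then have "meager X (A \<inter> b)" by (rule meager_subset[OF mW])
      then have "b \<subseteq> M" unfolding M_def Bm_def using b(1) by blast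
      moreover have "w \<in> D" using w W(3) interior_of_subset[of "top_of_set X" D] unfolding U0_def by blast
      ultimately show False using b(2) unfolding D_def by blast
    qed
    have "openin (top_of_set X) U0" unfolding U0_def by simp
    moreover have "U0 \<noteq> {}" unfolding U0_def by (rule False)
    moreover have "\<forall>W. openin (top_of_set X) W \<and> W \<noteq> {} \<and> W \<subseteq> U0 \<longrightarrow> \<not> meager X (A \<inter> W)"
      using key by simp
    ultimately show ?thesis by (intro exI[of _ U0] conjI)
  qed
qed




definition Bset :: "'a::metric_space set \<Rightarrow> ('a \<Rightarrow> 'a) \<Rightarrow> 'a \<Rightarrow> real \<Rightarrow> real \<Rightarrow> nat \<Rightarrow> 'a set" where
  "Bset X T x e c N = {y\<in>X. \<forall>a K. N \<le> K \<longrightarrow>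
      c * real K \<le> real (card ({n. dist ((T^^n) x) ((T^^n) y) \<le> e} \<inter> {a..<a+K}))}"

lemma Bset_mono: "N \<le> N' \<Longrightarrow> Bset X T x e c N \<subseteq> Bset X T x e c N'"
  unfolding Bset_def by auto

lemma BP_sub:
  assumes "e > 0" "c < 1"
  shows "BP X T x \<subseteq> (\<Union>N. Bset X T x e c N)"
proof
  fix y assume y: "y \<in> BP X T x"
  then have yX: "y \<in> X" and bp: "banach_proximal T x y" unfolding BP_def by auto
  have "banach_density_one {n. dist ((T^^n) x) ((T^^n) y) < e}"
    using bp assms(1) unfolding banach_proximal_def by blast
  then obtain N where N: "\<forall>a k. k \<ge> N \<longrightarrow>
      c * real k \<le> real (card ({n. dist ((T^^n) x) ((T^^n) y) < e} \<inter> {a..<a+k}))"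
    using assms(2) unfolding banach_density_one_def by blast
  have "y \<in> Bset X T x e c N" unfolding Bset_def
  proof (intro CollectI conjI allI impI yX)
    fix a K assume K: "N \<le> K"
    have "card ({n. dist ((T^^n) x) ((T^^n) y) < e} \<inter> {a..<a+K})
       \<le> card ({n. dist ((T^^n) x) ((T^^n) y) \<le> e} \<inter> {a..<a+K})"
      by (rule card_mono) auto
    then show "c * real K \<le> real (card ({n. dist ((T^^n) x) ((T^^n) y) \<le> e} \<inter> {a..<a+K}))"
      using N K by (meson of_nat_le_iff order_trans)
  qed
  then show "y \<in> (\<Union>N. Bset X T x e c N)" by blast
qed

lemma Bset_closed:
  assumes "tds X T"
  shows "closedin (top_of_set X) (Bset X T x e c N)"
proof -
  define P where "P n = X \<inter> (T^^n) -` cball ((T^^n) x) e" for n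
  have cP: "closedin (top_of_set X) (P n)" for n
    unfolding P_def by (rule continuous_closedin_preimage[OF funpow_cont[OF assms] closed_cball])
  have cS: "closedin (top_of_set X) (\<Inter>(insert X (P ` S)))" for S
  proof (rule closedin_Inter)
    show "insert X (P ` S) \<noteq> {}" by simp
    fix A assume "A \<in> insert X (P ` S)"
    then show "closedin (top_of_set X) A"
      using cP closedin_topspace[of "top_of_set X"] by auto
  qed
  define Q where "Q a K = \<Union>((\<lambda>S. \<Inter>(insert X (P ` S))) ` {S. S \<subseteq> {a..<a+K} \<and> c * real K \<le> real (card S)})" for a K :: nat
  have cQ: "closedin (top_of_set X) (Q a K)" for a K
    unfolding Q_def
  proof (rule closedin_Union)
    have "finite {S. S \<subseteq> {a..<a+K} \<and> c * real K \<le> real (card S)}"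
      by (rule finite_subset[of _ "Pow {a..<a+K}"]) auto
    then show "finite ((\<lambda>S. \<Inter>(insert X (P ` S))) ` {S. S \<subseteq> {a..<a+K} \<and> c * real K \<le> real (card S)})"
      by simp
    fix A assume "A \<in> (\<lambda>S. \<Inter>(insert X (P ` S))) ` {S. S \<subseteq> {a..<a+K} \<and> c * real K \<le> real (card S)}"
    then show "closedin (top_of_set X) A" using cS by auto
  qed
  have Qeq: "y \<in> Q a K \<longleftrightarrow> y \<in> X \<and>
      c * real K \<le> real (card ({n. dist ((T^^n) x) ((T^^n) y) \<le> e} \<inter> {a..<a+K}))" for y a K
  proof
    assume "y \<in> Q a K"
    then obtain S where S: "S \<subseteq> {a..<a+K}" "c * real K \<le> real (card S)" "y \<in> X" "\<forall>n\<in>S. y \<in> P n"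
      unfolding Q_def by auto
    have "S \<subseteq> {n. dist ((T^^n) x) ((T^^n) y) \<le> e} \<inter> {a..<a+K}"
      using S(1,4) unfolding P_def by auto
    then have "card S \<le> card ({n. dist ((T^^n) x) ((T^^n) y) \<le> e} \<inter> {a..<a+K})"
      by (intro card_mono) auto
    then show "y \<in> X \<and> c * real K \<le> real (card ({n. dist ((T^^n) x) ((T^^n) y) \<le> e} \<inter> {a..<a+K}))"
      using S(2,3) by linarith
  next
    assume a: "y \<in> X \<and> c * real K \<le> real (card ({n. dist ((T^^n) x) ((T^^n) y) \<le> e} \<inter> {a..<a+K}))"
    define S where "S = {n. dist ((T^^n) x) ((T^^n) y) \<le> e} \<inter> {a..<a+K}"
    have "S \<in> {S. S \<subseteq> {a..<a+K} \<and> c * real K \<le> real (card S)}" using a unfolding S_def by auto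
    moreover have "y \<in> \<Inter>(insert X (P ` S))" using a unfolding S_def P_def by auto
    ultimately show "y \<in> Q a K" unfolding Q_def by blast
  qed
  have "Bset X T x e c N = \<Inter>(insert X ((\<lambda>(a,K). Q a K) ` {(a,K). N \<le> K}))"
    unfolding Bset_def using Qeq by auto
  moreover have "closedin (top_of_set X) (\<Inter>(insert X ((\<lambda>(a,K). Q a K) ` {(a,K). N \<le> K})))"
  proof (rule closedin_Inter)
    show "insert X ((\<lambda>(a,K). Q a K) ` {(a,K). N \<le> K}) \<noteq> {}" by simp
    fix A assume "A \<in> insert X ((\<lambda>(a,K). Q a K) ` {(a,K). N \<le> K})"
    then show "closedin (top_of_set X) A"
      using cQ closedin_topspace[of "top_of_set X"] by auto
  qed
  ultimately show ?thesis by simp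
qed




lemma count_lemma:
  fixes X :: "'a::metric_space set"
  assumes tds: "tds X T" and tr: "transitive_sys X T"
    and G: "openin (top_of_set X) G" "G \<noteq> {}"
    and hyp: "\<forall>y\<in>G. y \<in> Bset X T x e c M \<and> (T^^p) y \<in> Bset X T x e c M"
    and z: "z \<in> X" and K: "M \<le> K"
  shows "real (card {m. m < K \<and> 2*e < dist ((T^^m) z) ((T^^p) ((T^^m) z))}) \<le> 2*(1-c)*real K"
proof -
  define S where "S = {m. m < K \<and> 2*e < dist ((T^^m) z) ((T^^p) ((T^^m) z))}"
  have finS: "finite S" unfolding S_def by simp
  define f where "f m w = dist ((T^^m) w) ((T^^(p+m)) w)" for m w
  have fS: "S = {m. m < K \<and> 2*e < f m z}" unfolding S_def f_def by (simp add: funpow_comm)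
  define F where "F m = X \<inter> f m -` {2*e<..}" for m
  have contf: "continuous_on X (f m)" for m
    unfolding f_def by (intro continuous_on_dist funpow_cont[OF tds])
  have oF: "openin (top_of_set X) (F m)" for m
    unfolding F_def by (rule continuous_openin_preimage_gen[OF contf open_greaterThan])
  define Wz where "Wz = \<Inter>(insert X (F ` S))"
  have oW: "openin (top_of_set X) Wz" unfolding Wz_def
  proof (rule openin_Inter)
    show "finite (insert X (F ` S))" using finS by simp
    show "insert X (F ` S) \<noteq> {}" by simp
    fix A assume "A \<in> insert X (F ` S)"
    then show "openin (top_of_set X) A" using oF openin_topspace[of "top_of_set X"] by auto
  qed
  have zW: "z \<in> Wz" unfolding Wz_def F_def using z fS by auto
  have "infinite {n. G \<inter> {x \<in> X. (T ^^ n) x \<in> Wz} \<noteq> {}}"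
    using tr G oW zW unfolding transitive_sys_def by blast
  then obtain j where "G \<inter> {x \<in> X. (T ^^ j) x \<in> Wz} \<noteq> {}"
    using infinite_imp_nonempty by fastforce
  then obtain y where y: "y \<in> G" "(T^^j) y \<in> Wz" by blast
  have yB: "y \<in> Bset X T x e c M" "(T^^p) y \<in> Bset X T x e c M" using hyp y(1) by auto
  define I where "I = {j..<j+K}"
  define A1 where "A1 = {n. dist ((T^^n) x) ((T^^n) y) \<le> e} \<inter> I"
  define A2 where "A2 = {n. dist ((T^^n) x) ((T^^n) ((T^^p) y)) \<le> e} \<inter> I"
  have cA1: "c * real K \<le> real (card A1)" using yB(1) K unfolding Bset_def A1_def I_def by auto
  have cA2: "c * real K \<le> real (card A2)" using yB(2) K unfolding Bset_def A2_def I_def by auto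
  have finI: "finite I" unfolding I_def by simp
  have cI: "card I = K" unfolding I_def by simp
  have sub: "(\<lambda>m. m + j) ` S \<subseteq> (I - A1) \<union> (I - A2)"
  proof
    fix n assume "n \<in> (\<lambda>m. m + j) ` S"
    then obtain m where m: "m \<in> S" "n = m + j" by blast
    have mK: "m < K" using m(1) unfolding S_def by simp
    have "(T^^j) y \<in> F m" using y(2) m(1) unfolding Wz_def by blast
    then have "2*e < f m ((T^^j) y)" unfolding F_def by simp
    then have big: "2*e < dist ((T^^n) y) ((T^^n) ((T^^p) y))"
      unfolding f_def m(2) by (simp add: funpow_comm add_ac)
    have nI: "n \<in> I" unfolding I_def m(2) using mK by simp
    show "n \<in> (I - A1) \<union> (I - A2)"
    proof (rule ccontr)
      assume "n \<notin> (I - A1) \<union> (I - A2)"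
      then have "dist ((T^^n) x) ((T^^n) y) \<le> e" "dist ((T^^n) x) ((T^^n) ((T^^p) y)) \<le> e"
        using nI unfolding A1_def A2_def by auto
      moreover have "dist ((T^^n) y) ((T^^n) ((T^^p) y)) \<le> dist ((T^^n) x) ((T^^n) y) + dist ((T^^n) x) ((T^^n) ((T^^p) y))"
        by (rule dist_triangle3)
      ultimately show False using big by linarith
    qed
  qed
  have "card S = card ((\<lambda>m. m + j) ` S)" by (simp add: card_image)
  also have "\<dots> \<le> card ((I - A1) \<union> (I - A2))" by (rule card_mono) (use finI sub in auto)
  also have "\<dots> \<le> card (I - A1) + card (I - A2)" by (rule card_Un_le)
  finally have cS: "card S \<le> card (I - A1) + card (I - A2)" .
  have "card (I - A1) = card I - card A1" by (rule card_Diff_subset) (use finI in \<open>auto simp: A1_def\<close>)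
  moreover have "card A1 \<le> card I" by (rule card_mono) (use finI in \<open>auto simp: A1_def\<close>)
  moreover have "card (I - A2) = card I - card A2" by (rule card_Diff_subset) (use finI in \<open>auto simp: A2_def\<close>)
  moreover have "card A2 \<le> card I" by (rule card_mono) (use finI in \<open>auto simp: A2_def\<close>)
  ultimately have "real (card S) \<le> (real K - real (card A1)) + (real K - real (card A2))"
    using cS cI by (simp add: of_nat_diff)
  then show ?thesis using cA1 cA2 unfolding S_def by (simp add: algebra_simps)
qed




lemma inv_space: "invariant_measure X T \<mu> \<Longrightarrow> space \<mu> = X"
  unfolding invariant_measure_def
  by (metis sets_eq_imp_space_eq space_borel space_restrict_space inf_top_right)

lemma funpow_meas:
  assumes "invariant_measure X T \<mu>" shows "(T^^m) \<in> measurable \<mu> \<mu>"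
proof (induction m)
  case 0 then show ?case by (simp add: measurable_ident)
next
  case (Suc m)
  have T: "T \<in> measurable \<mu> \<mu>" using assms unfolding invariant_measure_def by blast
  show ?case using measurable_comp[OF Suc.IH T] by (simp add: comp_def)
qed

lemma funpow_inv:
  assumes tds: "tds X T" and mu: "invariant_measure X T \<mu>"
  shows "A \<in> sets \<mu> \<Longrightarrow> emeasure \<mu> ((T^^m) -` A \<inter> X) = emeasure \<mu> A"
proof (induction m arbitrary: A)
  case 0 then show ?case using sets.sets_into_space[OF 0] inv_space[OF mu] by (simp add: Int_absorb2)
next
  case (Suc m)
  have Tm: "T \<in> measurable \<mu> \<mu>" and d: "distr \<mu> \<mu> T = \<mu>" using mu unfolding invariant_measure_def by blast+
  have sp: "space \<mu> = X" by (rule inv_space[OF mu])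
  have B: "T -` A \<inter> X \<in> sets \<mu>" using measurable_sets[OF Tm Suc.prems] sp by simp
  have "(T^^Suc m) -` A \<inter> X = (T^^m) -` (T -` A \<inter> X) \<inter> X"
    using funpow_maps[OF tds] by auto
  then have "emeasure \<mu> ((T^^Suc m) -` A \<inter> X) = emeasure \<mu> (T -` A \<inter> X)"
    using Suc.IH[OF B] by simp
  also have "\<dots> = emeasure (distr \<mu> \<mu> T) A" using emeasure_distr[OF Tm Suc.prems] sp by simp
  also have "\<dots> = emeasure \<mu> A" using d by simp
  finally show ?case .
qed

lemma meas_lemma:
  assumes tds: "tds X T" and mu: "invariant_measure X T \<mu>"
    and A: "A \<in> sets \<mu>" and K: "0 < K"
    and cnt: "\<forall>z\<in>X. real (card {m. m < K \<and> (T^^m) z \<in> A}) \<le> \<eta> * real K"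
  shows "measure \<mu> A \<le> \<eta>"
proof -
  have sp: "space \<mu> = X" by (rule inv_space[OF mu])
  interpret prob_space \<mu> using mu unfolding invariant_measure_def by blast
  define Am where "Am m = (T^^m) -` A \<inter> X" for m
  have sAm: "Am m \<in> sets \<mu>" for m
    using measurable_sets[OF funpow_meas[OF mu] A] sp unfolding Am_def by simp
  have eAm: "emeasure \<mu> (Am m) = emeasure \<mu> A" for m
    unfolding Am_def by (rule funpow_inv[OF tds mu A])
  obtain z0 where "z0 \<in> X" using tds unfolding tds_def by blast
  then have eta0: "0 \<le> \<eta> * real K" using cnt by (meson of_nat_0_le_iff order_trans)
  have "(\<Sum>m<K. emeasure \<mu> (Am m)) = (\<integral>\<^sup>+ z. (\<Sum>m<K. indicator (Am m) z) \<partial>\<mu>)"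
    by (subst nn_integral_sum) (use sAm in auto)
  also have "\<dots> \<le> (\<integral>\<^sup>+ z. ennreal (\<eta> * real K) \<partial>\<mu>)"
  proof (rule nn_integral_mono)
    fix z assume "z \<in> space \<mu>"
    then have zX: "z \<in> X" using sp by simp
    have "(\<Sum>m<K. indicator (Am m) z :: ennreal) = (\<Sum>m<K. indicator {m. (T^^m) z \<in> A} m)"
      using zX unfolding Am_def by (intro sum.cong) (auto simp: indicator_def)
    also have "\<dots> = of_nat (card ({..<K} \<inter> {m. (T^^m) z \<in> A}))"
      by (simp add: indicator_def sum.If_cases)
    also have "{..<K} \<inter> {m. (T^^m) z \<in> A} = {m. m < K \<and> (T^^m) z \<in> A}" by auto
    finally have "(\<Sum>m<K. indicator (Am m) z :: ennreal) = ennreal (real (card {m. m < K \<and> (T^^m) z \<in> A}))"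
      by (simp add: ennreal_of_nat_eq_real_of_nat)
    also have "\<dots> \<le> ennreal (\<eta> * real K)" using cnt zX by (simp add: ennreal_leI)
    finally show "(\<Sum>m<K. indicator (Am m) z :: ennreal) \<le> ennreal (\<eta> * real K)" .
  qed
  also have "\<dots> = ennreal (\<eta> * real K)" using emeasure_space_1 by simp
  finally have "(\<Sum>m<K. emeasure \<mu> (Am m)) \<le> ennreal (\<eta> * real K)" .
  moreover have "(\<Sum>m<K. emeasure \<mu> (Am m)) = ennreal (real K * measure \<mu> A)"
    using eAm by (simp add: emeasure_eq_measure ennreal_of_nat_eq_real_of_nat ennreal_mult)
  ultimately have "real K * measure \<mu> A \<le> \<eta> * real K" using eta0 by simp
  then show ?thesis using K by (simp add: mult.commute)
qed




lemma openin_sets: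
  assumes mu: "invariant_measure X T \<mu>" and O: "openin (top_of_set X) O'"
  shows "O' \<in> sets \<mu>"
proof -
  obtain U where U: "open U" "O' = X \<inter> U" using O unfolding openin_open by blast
  have "U \<in> sets borel" using U(1) by (rule borel_open)
  then have "X \<inter> U \<in> sets (restrict_space borel X)" unfolding sets_restrict_space by blast
  then show ?thesis using mu U(2) unfolding invariant_measure_def by simp
qed

lemma closedin_sets:
  assumes mu: "invariant_measure X T \<mu>" and C: "closedin (top_of_set X) C'"
  shows "C' \<in> sets \<mu>"
proof -
  have "openin (top_of_set X) (X - C')" using C by (simp add: openin_diff)
  then have "X - C' \<in> sets \<mu>" by (rule openin_sets[OF mu])
  then have "space \<mu> - (X - C') \<in> sets \<mu>" by (rule sets.compl_sets)
  moreover have "space \<mu> - (X - C') = C'" using inv_space[OF mu] closedin_imp_subset[OF C] by auto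
  ultimately show ?thesis by simp
qed

theorem mainTheorem12:
  fixes X :: "'a::metric_space set" and T :: "'a \<Rightarrow> 'a"
  assumes "tds X T"
    and "transitive_sys X T"
    and "semi_open X T"
    and "\<And>n::nat. n \<ge> 1 \<Longrightarrow> supp X T - Fix X T n \<noteq> {}"
  shows "\<forall>x\<in>X. first_category_in X (BP X T x)"
proof
  fix x assume xX: "x \<in> X"
  note tds = assms(1) and tr = assms(2) and so = assms(3)
  have cX: "compact X" using tds unfolding tds_def by blast
  have BPsub: "BP X T x \<subseteq> X" unfolding BP_def by blast
  show "first_category_in X (BP X T x)"
  proof (rule ccontr)
    assume nfc: "\<not> first_category_in X (BP X T x)"
    have nm: "\<not> meager X (BP X T x)" using nfc meager_first_cat[OF BPsub] by blast
    obtain U0 where U0: "openin (top_of_set X) U0" "U0 \<noteq> {}"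
      "\<forall>W. openin (top_of_set X) W \<and> W \<noteq> {} \<and> W \<subseteq> U0 \<longrightarrow> \<not> meager X (BP X T x \<inter> W)"
      using local_nonmeager[OF cX BPsub nm] by (elim exE conjE)
    have key: "\<exists>G N. openin (top_of_set X) G \<and> G \<noteq> {} \<and> G \<subseteq> W \<and> G \<subseteq> Bset X T x e c N"
      if W: "openin (top_of_set X) W" "W \<noteq> {}" "W \<subseteq> U0" and ec: "e > 0" "c < 1" for W e c
    proof (cases "\<forall>N. nowhere_dense_in X (Bset X T x e c N \<inter> W)")
      case True
      have "meager X (\<Union>N\<in>UNIV. Bset X T x e c N \<inter> W)"
        by (rule meager_UN) (use True nd_meager in auto)
      moreover have "BP X T x \<inter> W \<subseteq> (\<Union>N\<in>UNIV. Bset X T x e c N \<inter> W)"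
        using BP_sub[OF ec, of X T x] by blast
      ultimately have "meager X (BP X T x \<inter> W)" by (rule meager_subset)
      then show ?thesis using U0(3) W by blast
    next
      case False
      then obtain N where N: "\<not> nowhere_dense_in X (Bset X T x e c N \<inter> W)" by blast
      obtain G where G: "openin (top_of_set X) G" "G \<noteq> {}" "G \<subseteq> Bset X T x e c N \<inter> W"
        using not_nd_open[OF Bset_closed[OF tds] W(1) N] by (elim exE conjE)
      show ?thesis using G by (intro exI[of _ G] exI[of _ N]) blast
    qed
    have "infinite {n. U0 \<inter> {x \<in> X. (T ^^ n) x \<in> U0} \<noteq> {}}"
      using tr U0(1,2) unfolding transitive_sys_def by blast
    then obtain p where p: "1 \<le> p" "U0 \<inter> {x \<in> X. (T ^^ p) x \<in> U0} \<noteq> {}"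
      unfolding infinite_nat_iff_unbounded_le by blast
    define V0 where "V0 = U0 \<inter> (X \<inter> (T^^p) -` U0)"
    have mapsp: "(T^^p) \<in> X \<rightarrow> X" using funpow_maps[OF tds] by blast
    have oV0: "openin (top_of_set X) V0" unfolding V0_def
      by (intro openin_Int U0(1) continuous_openin_preimage[OF funpow_cont[OF tds] mapsp U0(1)])
    have V0ne: "V0 \<noteq> {}" using p(2) unfolding V0_def by blast
    have V0U0: "V0 \<subseteq> U0" unfolding V0_def by blast
    define W where "W = (top_of_set X) interior_of ((T^^p) ` V0)"
    have oW: "openin (top_of_set X) W" unfolding W_def by simp
    have Wne: "W \<noteq> {}" unfolding W_def by (rule semi_open_iter[OF tds so oV0 V0ne])
    have Wsub: "W \<subseteq> (T^^p) ` V0" unfolding W_def by (rule interior_of_subset)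
    have WU0: "W \<subseteq> U0" using Wsub unfolding V0_def by blast
    have good: "\<exists>G M. openin (top_of_set X) G \<and> G \<noteq> {} \<and>
        (\<forall>y\<in>G. y \<in> Bset X T x e c M \<and> (T^^p) y \<in> Bset X T x e c M)"
      if ec: "e > 0" "c < 1" for e c
    proof -
      obtain G1 N1 where G1: "openin (top_of_set X) G1" "G1 \<noteq> {}" "G1 \<subseteq> W" "G1 \<subseteq> Bset X T x e c N1"
        using key[OF oW Wne WU0 ec] by (elim exE conjE)
      define H where "H = V0 \<inter> (X \<inter> (T^^p) -` G1)"
      have oH: "openin (top_of_set X) H" unfolding H_def
        by (intro openin_Int oV0 continuous_openin_preimage[OF funpow_cont[OF tds] mapsp G1(1)])
      obtain g where g: "g \<in> G1" using G1(2) by blast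
      then obtain v where v: "v \<in> V0" "g = (T^^p) v" using G1(3) Wsub by blast
      have "v \<in> X" using v(1) unfolding V0_def by blast
      then have "v \<in> H" unfolding H_def using v g by blast
      then have Hne: "H \<noteq> {}" by blast
      have HU0: "H \<subseteq> U0" unfolding H_def V0_def by blast
      obtain G2 N2 where G2: "openin (top_of_set X) G2" "G2 \<noteq> {}" "G2 \<subseteq> H" "G2 \<subseteq> Bset X T x e c N2"
        using key[OF oH Hne HU0 ec] by (elim exE conjE)
      have "\<forall>y\<in>G2. y \<in> Bset X T x e c (max N1 N2) \<and> (T^^p) y \<in> Bset X T x e c (max N1 N2)"
      proof
        fix y assume y: "y \<in> G2"
        have "y \<in> Bset X T x e c N2" using y G2(4) by blast
        then have 1: "y \<in> Bset X T x e c (max N1 N2)" using Bset_mono[of N2 "max N1 N2" X T x e c] by auto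
        have "(T^^p) y \<in> G1" using y G2(3) unfolding H_def by blast
        then have "(T^^p) y \<in> Bset X T x e c N1" using G1(4) by blast
        then have 2: "(T^^p) y \<in> Bset X T x e c (max N1 N2)" using Bset_mono[of N1 "max N1 N2" X T x e c] by auto
        show "y \<in> Bset X T x e c (max N1 N2) \<and> (T^^p) y \<in> Bset X T x e c (max N1 N2)" using 1 2 by blast
      qed
      then show ?thesis using G2(1,2) by (intro exI[of _ G2] exI[of _ "max N1 N2"]) blast
    qed
    define f where "f w = dist w ((T^^p) w)" for w
    have contf: "continuous_on X f" unfolding f_def
      by (intro continuous_on_dist continuous_on_id funpow_cont[OF tds])
    define Od where "Od d = X \<inter> f -` {d<..}" for d
    have oOd: "openin (top_of_set X) (Od d)" for d
      unfolding Od_def by (rule continuous_openin_preimage_gen[OF contf open_greaterThan])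
    have est: "measure \<mu> (Od (2*e)) \<le> 2*(1-c)"
      if mu: "invariant_measure X T \<mu>" and ec: "e > 0" "c < 1" for \<mu> e c
    proof -
      obtain G M where G: "openin (top_of_set X) G" "G \<noteq> {}"
          "\<forall>y\<in>G. y \<in> Bset X T x e c M \<and> (T^^p) y \<in> Bset X T x e c M"
        using good[OF ec] by (elim exE conjE)
      define K where "K = max M 1"
      have K: "0 < K" "M \<le> K" unfolding K_def by auto
      have "\<forall>z\<in>X. real (card {m. m < K \<and> (T^^m) z \<in> Od (2*e)}) \<le> 2*(1-c) * real K"
      proof
        fix z assume z: "z \<in> X"
        have "{m. m < K \<and> (T^^m) z \<in> Od (2*e)} = {m. m < K \<and> 2*e < dist ((T^^m) z) ((T^^p) ((T^^m) z))}"
          unfolding Od_def f_def using funpow_maps[OF tds z] by auto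
        then show "real (card {m. m < K \<and> (T^^m) z \<in> Od (2*e)}) \<le> 2*(1-c) * real K"
          using count_lemma[OF tds tr G(1,2,3) z K(2)] by simp
      qed
      then show ?thesis by (rule meas_lemma[OF tds mu openin_sets[OF mu oOd] K(1)])
    qed
    have zero: "measure \<mu> (Od d) = 0" if mu: "invariant_measure X T \<mu>" and d: "d > 0" for \<mu> d
    proof (rule ccontr)
      assume ne: "measure \<mu> (Od d) \<noteq> 0"
      have pos: "measure \<mu> (Od d) > 0" using ne measure_nonneg[of \<mu> "Od d"] by linarith
      define c where "c = 1 - measure \<mu> (Od d) / 4"
      have "measure \<mu> (Od (2*(d/2))) \<le> 2*(1-c)"
        by (rule est[OF mu]) (use d pos in \<open>auto simp: c_def\<close>)
      then show False using pos unfolding c_def by simp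
    qed
    have FixC: "closedin (top_of_set X) (Fix X T p)"
    proof -
      have "closedin (top_of_set X) (X \<inter> f -` {0})"
        by (rule continuous_closedin_preimage[OF contf closed_singleton])
      moreover have "X \<inter> f -` {0} = Fix X T p" unfolding Fix_def f_def by auto
      ultimately show ?thesis by simp
    qed
    have Fix1: "emeasure \<mu> (Fix X T p) = 1" if mu: "invariant_measure X T \<mu>" for \<mu>
    proof -
      interpret prob_space \<mu> using mu unfolding invariant_measure_def by blast
      have sp: "space \<mu> = X" by (rule inv_space[OF mu])
      have null: "Od (inverse (real (Suc k))) \<in> null_sets \<mu>" for k
      proof (rule null_setsI)
        show "Od (inverse (real (Suc k))) \<in> sets \<mu>" by (rule openin_sets[OF mu oOd])
        then show "emeasure \<mu> (Od (inverse (real (Suc k)))) = 0"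
          using zero[OF mu, of "inverse (real (Suc k))"] by (simp add: emeasure_eq_measure)
      qed
      have Nn: "(\<Union>k. Od (inverse (real (Suc k)))) \<in> null_sets \<mu>" using null by (rule null_sets_UN)
      have eq: "X - (\<Union>k. Od (inverse (real (Suc k)))) = Fix X T p"
      proof
        show "X - (\<Union>k. Od (inverse (real (Suc k)))) \<subseteq> Fix X T p"
        proof
          fix w assume w: "w \<in> X - (\<Union>k. Od (inverse (real (Suc k))))"
          show "w \<in> Fix X T p"
          proof (rule ccontr)
            assume "w \<notin> Fix X T p"
            then have "f w > 0" using w unfolding Fix_def f_def by auto
            then obtain k where "inverse (real (Suc k)) < f w" using reals_Archimedean by blast
            then have "w \<in> Od (inverse (real (Suc k)))" using w unfolding Od_def by auto
            then show False using w by blast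
          qed
        qed
        show "Fix X T p \<subseteq> X - (\<Union>k. Od (inverse (real (Suc k))))"
          unfolding Fix_def Od_def f_def by auto
      qed
      have "emeasure \<mu> (X - (\<Union>k. Od (inverse (real (Suc k))))) = emeasure \<mu> X"
        by (rule emeasure_Diff_null_set[OF Nn]) (use sp in auto)
      then show ?thesis using eq emeasure_space_1 sp by simp
    qed
    have "Fix X T p \<in> {C. closedin (top_of_set X) C \<and>
                    (\<forall>\<mu>. invariant_measure X T \<mu> \<longrightarrow> emeasure \<mu> C = 1)}"
      using FixC Fix1 by blast
    then have "supp X T \<subseteq> Fix X T p" unfolding supp_def by (rule Inter_lower)
    then show False using assms(4)[OF p(1)] by blast
  qed
qed


end
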